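(* Let $P$ be a program, $s$ a state and $\varphi$ a valuation formula. If $\langle P,s\rangle\models\Box\varphi$, then there exists $\mathbf z\in\mathbb N_+$ such that for every scheduler $\mathcal S$ that is non-blocking w.r.t. $\langle P,s\rangle$ we have $\langle P,s\rangle\Downarrow^{\mathcal S,\mathbf z}\mu$ for some valuation $\mu$ with $\mu\in\varphi$.
   Context: Fix a set $S$ of states (a discrete space). $\mathcal V_{=1,\omega}(X)$ (resp. $\mathcal V_{\le1,\omega}(X)$) is the set of finitely supported probability (resp. subprobability) distributions on $X$, written $\sum_i p_i\cdot x_i$, $\bot$ the zero distribution, ordered/added/scaled pointwise. Programs: $P::=\mathtt{skip}\mid\mathtt a\mid P;P\mid P\parallel P\mid P+_{\mathtt p}P\mid P+P\mid\mathtt{if}\ \mathtt b\ \mathtt{then}\ P\ \mathtt{else}\ P\mid\mathtt{while}\ \mathtt b\ P$, where atomic programs have given interpretations $[\![\mathtt a]\!]:S\to\mathcal V_{=1,\omega}(S)$ and conditions $[\![\mathtt b]\!]:S\to\{\mathtt{tt},\mathtt{ff}\}$. Small-step relation $\longrightarrow\subseteq(\mathrm{Pr}\times S)\times\mathcal V_{=1,\omega}(S+\mathrm{Pr}\times S)$: least relation with $\langle\mathtt a,s\rangle\to[\![\mathtt a]\!](s)$; $\langle\mathtt{skip},s\rangle\to1\cdot s$; if $\langle P,s\rangle\to\sum_ip_i\langle P_i,s_i\rangle+\sum_jp_j s_j$ then $\langle P;Q,s\rangle\to\sum_ip_i\langle P_i;Q,s_i\rangle+\sum_jp_j\langle Q,s_j\rangle$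 and $\langle P\parallel Q,s\rangle\to\sum_ip_i\langle P_i\parallel Q,s_i\rangle+\sum_jp_j\langle Q,s_j\rangle$; symmetrically if $\langle Q,s\rangle\to\sum_ip_i\langle Q_i,s_i\rangle+\sum_jp_js_j$ then $\langle P\parallel Q,s\rangle\to\sum_ip_i\langle P\parallel Q_i,s_i\rangle+\sum_jp_j\langle P,s_j\rangle$; $\langle P+_{\mathtt p}Q,s\rangle\to\mathtt p\mu+(1-\mathtt p)\nu$ if $\langle P,s\rangle\to\mu$, $\langle Q,s\rangle\to\nu$; $\langle P+Q,s\rangle\to\mu$ if $\langle P,s\rangle\to\mu$ or $\langle Q,s\rangle\to\mu$; conditionals go with probability 1 to $\langle P,s\rangle$ or $\langle Q,s\rangle$ according to $[\![\mathtt b]\!](s)$; $\langle\mathtt{while}\ \mathtt b\ P,s\rangle\to1\cdot\langle P;\mathtt{while}\ \mathtt b\ P,s\rangle$ if $[\![\mathtt b]\!](s)=\mathtt{tt}$, else $\to1\cdot s$. $\langle P,s\rangle\!\longrightarrow=\{\mu\mid\langle P,s\rangle\to\mu\}$. With $I=((\mathrm{Pr}\times S)\times\mathcal V_{=1,\omega}(S+\mathrm{Pr}\times S))^*\times(\mathrm{Pr}\times S)$ (elements $h\langle P,s\rangle$, $h$ a history), a scheduler is a partial map $\mathcal S:I\rightharpoonup\mathcal V_{=1,\omega}(S+\mathrm{Pr}\times S)$ whose value at $h\langle P,s\rangle$, when defined, is a finite convex combination of elements of $\langle P,s\rangle\!\longrightarrow$. Big-step: $h\langle P,s\rangle\Downarrow^{\mathcal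 S,0}\bot$; $h\langle P,s\rangle\Downarrow^{\mathcal S,n+1}\sum_kp_k(\sum_ip_{k,i}\mu_{k,i}+\sum_jp_{k,j}s_{k,j})$ whenever $\mathcal S(h\langle P,s\rangle)=\sum_kp_k\nu_k$, $\nu_k=\sum_ip_{k,i}\langle P_{k,i},s_{k,i}\rangle+\sum_jp_{k,j}s_{k,j}$, and $h\langle P,s\rangle\nu_k\langle P_{k,i},s_{k,i}\rangle\Downarrow^{\mathcal S,n}\mu_{k,i}$ for all $k,i$ (empty history omitted). $\mathcal S$ is non-blocking w.r.t. $\langle P,s\rangle$ if for every $n\in\mathbb N$ there is $\mu$ with $\langle P,s\rangle\Downarrow^{\mathcal S,n}\mu$. $\mathcal V(S)$ is the set of continuous valuations on discrete $S$ (i.e. $[0,\infty]$-valued measures on all subsets), ordered pointwise, with its Scott topology. Valuation formulas $\varphi::=\mathbb P_{>p}U\mid\varphi\wedge\varphi\mid\bigvee_{j\in J}\varphi_j\mid\bot\mid\top$ ($U\subseteq S$, $p\in\mathbb R_{\ge0}$, $J$ any index set) denote Scott-open subsets of $\mathcal V(S)$: $\mathbb P_{>p}U=\{\mu\mid\mu(U)>p\}$, $\wedge$ is intersection, $\bigvee$ union, $\bot=\emptyset$, $\top=\mathcal V(S)$. $\langle P,s\rangle\models\Box\varphi$ iff for every scheduler $\mathcal S$ non-blocking w.r.t. $\langle P,s\rangle$ there exist $n\in\mathbb N$ and $\mu$ with $\langle P,s\rangle\Downarrow^{\mathcal S,n}\mu$ and $\mu\in\varphi$. *)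

theory Defs
  imports Complex_Main "HOL-Library.Extended_Nonnegative_Real"
begin

text \<open>A finitely supported distribution on X is represented by its weight function X => real.\<close>

type_synonym 'x dist = "'x \<Rightarrow> real"

definition supp :: "'x dist \<Rightarrow> 'x set" where
  "supp \<mu> = {x. \<mu> x \<noteq> 0}"

definition is_pdist :: "'x dist \<Rightarrow> bool" where
  "is_pdist \<mu> \<longleftrightarrow> (\<forall>x. 0 \<le> \<mu> x) \<and> finite (supp \<mu>) \<and> sum \<mu> (supp \<mu>) = 1"

definition dpoint :: "'x \<Rightarrow> 'x dist" where
  "dpoint x = (\<lambda>y. if y = x then 1 else 0)"

definition dmap :: "('x \<Rightarrow> 'y) \<Rightarrow> 'x dist \<Rightarrow> 'y dist" where
  "dmap f \<mu> = (\<lambda>y. sum \<mu> {x \<in> supp \<mu>. f x = y})"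

datatype ('a, 'b) prog =
    Skip
  | Atom 'a
  | Seq "('a, 'b) prog" "('a, 'b) prog"
  | Par "('a, 'b) prog" "('a, 'b) prog"
  | PChoice real "('a, 'b) prog" "('a, 'b) prog"
  | NChoice "('a, 'b) prog" "('a, 'b) prog"
  | If 'b "('a, 'b) prog" "('a, 'b) prog"
  | While 'b "('a, 'b) prog"

fun wf_prog :: "('a, 'b) prog \<Rightarrow> bool" where
  "wf_prog Skip = True"
| "wf_prog (Atom a) = True"
| "wf_prog (Seq P Q) = (wf_prog P \<and> wf_prog Q)"
| "wf_prog (Par P Q) = (wf_prog P \<and> wf_prog Q)"
| "wf_prog (PChoice p P Q) = (0 \<le> p \<and> p \<le> 1 \<and> wf_prog P \<and> wf_prog Q)"
| "wf_prog (NChoice P Q) = (wf_prog P \<and> wf_prog Q)"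
| "wf_prog (If b P Q) = (wf_prog P \<and> wf_prog Q)"
| "wf_prog (While b P) = wf_prog P"

type_synonym ('a, 'b, 's) conf = "('a, 'b) prog \<times> 's"
type_synonym ('a, 'b, 's) out = "('s + ('a, 'b, 's) conf) dist"

text \<open>A: interpretation of atomic programs, B: interpretation of conditions.\<close>

inductive step :: "('a \<Rightarrow> 's \<Rightarrow> 's dist) \<Rightarrow> ('b \<Rightarrow> 's \<Rightarrow> bool)
                   \<Rightarrow> ('a, 'b, 's) conf \<Rightarrow> ('a, 'b, 's) out \<Rightarrow> bool"
  for A :: "'a \<Rightarrow> 's \<Rightarrow> 's dist" and B :: "'b \<Rightarrow> 's \<Rightarrow> bool" where
  atom: "step A B (Atom a, s) (dmap Inl (A a s))"
| skip: "step A B (Skip, s) (dpoint (Inl s))"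
| seq: "step A B (P, s) \<mu> \<Longrightarrow>
     step A B (Seq P Q, s)
       (dmap (case_sum (\<lambda>s'. Inr (Q, s')) (\<lambda>(P', s'). Inr (Seq P' Q, s'))) \<mu>)"
| par_l: "step A B (P, s) \<mu> \<Longrightarrow>
     step A B (Par P Q, s)
       (dmap (case_sum (\<lambda>s'. Inr (Q, s')) (\<lambda>(P', s'). Inr (Par P' Q, s'))) \<mu>)"
| par_r: "step A B (Q, s) \<mu> \<Longrightarrow>
     step A B (Par P Q, s)
       (dmap (case_sum (\<lambda>s'. Inr (P, s')) (\<lambda>(Q', s'). Inr (Par P Q', s'))) \<mu>)"
| pchoice: "step A B (P, s) \<mu> \<Longrightarrow> step A B (Q, s) \<nu> \<Longrightarrow>
     step A B (PChoice p P Q, s) (\<lambda>x. p * \<mu> x + (1 - p) * \<nu> x)"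
| nchoice_l: "step A B (P, s) \<mu> \<Longrightarrow> step A B (NChoice P Q, s) \<mu>"
| nchoice_r: "step A B (Q, s) \<mu> \<Longrightarrow> step A B (NChoice P Q, s) \<mu>"
| if_tt: "B b s \<Longrightarrow> step A B (If b P Q, s) (dpoint (Inr (P, s)))"
| if_ff: "\<not> B b s \<Longrightarrow> step A B (If b P Q, s) (dpoint (Inr (Q, s)))"
| while_tt: "B b s \<Longrightarrow> step A B (While b P, s) (dpoint (Inr (Seq P (While b P), s)))"
| while_ff: "\<not> B b s \<Longrightarrow> step A B (While b P, s) (dpoint (Inl s))"

text \<open>An element h<P,s> of I is a pair (h, (P,s)) with h a list of (configuration, chosen step).\<close>
type_synonym ('a, 'b, 's) hist = "(('a, 'b, 's) conf \<times> ('a, 'b, 's) out) list"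
type_synonym ('a, 'b, 's) sched = "('a, 'b, 's) hist \<times> ('a, 'b, 's) conf \<Rightarrow> ('a, 'b, 's) out option"

definition convex_decomp ::
  "('a \<Rightarrow> 's \<Rightarrow> 's dist) \<Rightarrow> ('b \<Rightarrow> 's \<Rightarrow> bool) \<Rightarrow> ('a, 'b, 's) conf \<Rightarrow> ('a, 'b, 's) out
   \<Rightarrow> nat \<Rightarrow> (nat \<Rightarrow> real) \<Rightarrow> (nat \<Rightarrow> ('a, 'b, 's) out) \<Rightarrow> bool" where
  "convex_decomp A B c v K w \<nu> \<longleftrightarrow>
     (\<forall>k<K. 0 \<le> w k \<and> step A B c (\<nu> k)) \<and> (\<Sum>k<K. w k) = 1 \<and>
     v = (\<lambda>x. \<Sum>k<K. w k * \<nu> k x)"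

definition is_scheduler ::
  "('a \<Rightarrow> 's \<Rightarrow> 's dist) \<Rightarrow> ('b \<Rightarrow> 's \<Rightarrow> bool) \<Rightarrow> ('a, 'b, 's) sched \<Rightarrow> bool" where
  "is_scheduler A B Sc \<longleftrightarrow>
     (\<forall>h c v. Sc (h, c) = Some v \<longrightarrow> (\<exists>K w \<nu>. convex_decomp A B c v K w \<nu>))"

text \<open>bigstep A B Sc n h c mu  means  h<P,s> \<Down>^{Sc,n} mu  (with c = (P,s)).
  The results are finitely supported subprobability distributions on states (weight functions).\<close>
inductive bigstep ::
  "('a \<Rightarrow> 's \<Rightarrow> 's dist) \<Rightarrow> ('b \<Rightarrow> 's \<Rightarrow> bool) \<Rightarrow> ('a, 'b, 's) sched
   \<Rightarrow> nat \<Rightarrow> ('a, 'b, 's) hist \<Rightarrow> ('a, 'b, 's) conf \<Rightarrow> 's dist \<Rightarrow> bool"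
  for A B Sc where
  zero: "bigstep A B Sc 0 h c (\<lambda>_. 0)"
| succ: "\<lbrakk> Sc (h, c) = Some v; convex_decomp A B c v K w \<nu>;
           \<forall>k<K. \<forall>c'. \<nu> k (Inr c') \<noteq> 0 \<longrightarrow> bigstep A B Sc n (h @ [(c, \<nu> k)]) c' (m k c') \<rbrakk>
         \<Longrightarrow> bigstep A B Sc (Suc n) h c
               (\<lambda>t. \<Sum>k<K. w k * ((\<Sum>c'\<in>{c'. \<nu> k (Inr c') \<noteq> 0}. \<nu> k (Inr c') * m k c' t)
                                    + \<nu> k (Inl t)))"

definition non_blocking ::
  "('a \<Rightarrow> 's \<Rightarrow> 's dist) \<Rightarrow> ('b \<Rightarrow> 's \<Rightarrow> bool) \<Rightarrow> ('a, 'b, 's) sched \<Rightarrow> ('a, 'b, 's) conf \<Rightarrow> bool" where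
  "non_blocking A B Sc c \<longleftrightarrow> (\<forall>n. \<exists>\<mu>. bigstep A B Sc n [] c \<mu>)"

text \<open>Valuations on the discrete space S: maps 's set => ennreal.
  A finitely supported subdistribution mu is viewed as the valuation U |-> sum of mu over U.\<close>
definition val_of :: "'s dist \<Rightarrow> ('s set \<Rightarrow> ennreal)" where
  "val_of \<mu> = (\<lambda>U. ennreal (sum \<mu> (U \<inter> supp \<mu>)))"

text \<open>The subsets of V(S) denoted by valuation formulas
  phi ::= P_{>p} U | phi /\ phi | \/_{j in J} phi_j | bot | top
  (an arbitrary disjunction over an index set J is the union of a family of denotations).\<close>
inductive vformula_den :: "('s set \<Rightarrow> ennreal) set \<Rightarrow> bool" where
  prob: "0 \<le> p \<Longrightarrow> vformula_den {\<nu>. \<nu> U > ennreal p}"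
| conj: "vformula_den X \<Longrightarrow> vformula_den Y \<Longrightarrow> vformula_den (X \<inter> Y)"
| disj: "(\<forall>X\<in>F. vformula_den X) \<Longrightarrow> vformula_den (\<Union>F)"
| bot: "vformula_den {}"
| top: "vformula_den UNIV"

definition models_box ::
  "('a \<Rightarrow> 's \<Rightarrow> 's dist) \<Rightarrow> ('b \<Rightarrow> 's \<Rightarrow> bool) \<Rightarrow> ('a, 'b, 's) conf
   \<Rightarrow> ('s set \<Rightarrow> ennreal) set \<Rightarrow> bool" where
  "models_box A B c \<phi> \<longleftrightarrow>
     (\<forall>Sc. is_scheduler A B Sc \<and> non_blocking A B Sc c \<longrightarrow>
        (\<exists>n \<mu>. bigstep A B Sc n [] c \<mu> \<and> val_of \<mu> \<in> \<phi>))"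

end

theory Submission
  imports Defs "HOL-Analysis.Analysis"
begin

definition stepset :: "('a \<Rightarrow> 's \<Rightarrow> 's dist) \<Rightarrow> ('b \<Rightarrow> 's \<Rightarrow> bool) \<Rightarrow> ('a,'b,'s) conf \<Rightarrow> ('a,'b,'s) out set" where
  "stepset A B c = {\<mu>. step A B c \<mu>}"

inductive_cases step_SkipE: "step A B (Skip, s) \<mu>"
inductive_cases step_AtomE: "step A B (Atom a, s) \<mu>"
inductive_cases step_SeqE: "step A B (Seq P Q, s) \<mu>"
inductive_cases step_ParE: "step A B (Par P Q, s) \<mu>"
inductive_cases step_PChoiceE: "step A B (PChoice p P Q, s) \<mu>"
inductive_cases step_NChoiceE: "step A B (NChoice P Q, s) \<mu>"
inductive_cases step_IfE: "step A B (If b P Q, s) \<mu>"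
inductive_cases step_WhileE: "step A B (While b P, s) \<mu>"

lemma finite_stepset: "finite (stepset A B (P, s))"
proof (induction P arbitrary: s)
  case Skip
  have "stepset A B (Skip, s) \<subseteq> {dpoint (Inl s)}" by (auto simp: stepset_def elim: step_SkipE)
  then show ?case using finite_subset by blast
next
  case (Atom a)
  have "stepset A B (Atom a, s) \<subseteq> {dmap Inl (A a s)}" by (auto simp: stepset_def elim: step_AtomE)
  then show ?case using finite_subset by blast
next
  case (Seq P Q)
  have "stepset A B (Seq P Q, s) \<subseteq> (\<lambda>\<mu>. dmap (case_sum (\<lambda>s'. Inr (Q, s')) (\<lambda>(P', s'). Inr (Seq P' Q, s'))) \<mu>) ` stepset A B (P, s)"
    by (auto simp: stepset_def elim!: step_SeqE)
  then show ?case using finite_subset Seq by blast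
next
  case (Par P Q)
  have "stepset A B (Par P Q, s) \<subseteq> (\<lambda>\<mu>. dmap (case_sum (\<lambda>s'. Inr (Q, s')) (\<lambda>(P', s'). Inr (Par P' Q, s'))) \<mu>) ` stepset A B (P, s)
     \<union> (\<lambda>\<mu>. dmap (case_sum (\<lambda>s'. Inr (P, s')) (\<lambda>(Q', s'). Inr (Par P Q', s'))) \<mu>) ` stepset A B (Q, s)"
    by (auto simp: stepset_def elim!: step_ParE)
  then show ?case using finite_subset Par by blast
next
  case (PChoice p P Q)
  have "stepset A B (PChoice p P Q, s) \<subseteq> (\<lambda>(\<mu>,\<nu>). (\<lambda>x. p * \<mu> x + (1 - p) * \<nu> x)) ` (stepset A B (P, s) \<times> stepset A B (Q, s))"
  proof
    fix x assume "x \<in> stepset A B (PChoice p P Q, s)"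
    then obtain \<mu> \<nu> where h: "step A B (P,s) \<mu>" "step A B (Q,s) \<nu>" "x = (\<lambda>y. p * \<mu> y + (1 - p) * \<nu> y)"
      unfolding stepset_def by (auto elim: step_PChoiceE)
    show "x \<in> (\<lambda>(\<mu>,\<nu>). (\<lambda>x. p * \<mu> x + (1 - p) * \<nu> x)) ` (stepset A B (P, s) \<times> stepset A B (Q, s))"
      by (rule image_eqI[where x="(\<mu>,\<nu>)"]) (use h in \<open>auto simp: stepset_def\<close>)
  qed
  then show ?case using finite_subset PChoice by blast
next
  case (NChoice P Q)
  have "stepset A B (NChoice P Q, s) \<subseteq> stepset A B (P, s) \<union> stepset A B (Q, s)"
    by (auto simp: stepset_def elim!: step_NChoiceE)
  then show ?case using finite_subset NChoice by blast
next
  case (If b P Q)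
  have "stepset A B (If b P Q, s) \<subseteq> {dpoint (Inr (P, s)), dpoint (Inr (Q, s))}"
    by (auto simp: stepset_def elim!: step_IfE)
  then show ?case using finite_subset by blast
next
  case (While b P)
  have "stepset A B (While b P, s) \<subseteq> {dpoint (Inr (Seq P (While b P), s)), dpoint (Inl s)}"
    by (auto simp: stepset_def elim!: step_WhileE)
  then show ?case using finite_subset by blast
qed

lemma finite_stepset': "finite (stepset A B c)"
  using finite_stepset[of A B "fst c" "snd c"] by simp

lemma step_exists: "\<exists>\<mu>. step A B (P, s) \<mu>"
proof (induction P arbitrary: s)
  case (If b P Q) then show ?case by (cases "B b s") (auto intro: step.intros)
next
  case (While b P) then show ?case by (cases "B b s") (auto intro: step.intros)
next
  case (PChoice p P Q) then show ?case by (meson step.pchoice)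
next
  case (Seq P Q) then show ?case by (meson step.seq)
next
  case (Par P Q) then show ?case by (meson step.par_l)
next
  case (NChoice P Q) then show ?case by (meson step.nchoice_l)
qed (auto intro: step.intros)

lemma stepset_nonempty: "stepset A B c \<noteq> {}"
  using step_exists[of A B "fst c" "snd c"] by (auto simp: stepset_def)

lemma supp_dmap: "supp (dmap f \<mu>) \<subseteq> f ` supp \<mu>"
proof
  fix y assume "y \<in> supp (dmap f \<mu>)"
  then have "sum \<mu> {x \<in> supp \<mu>. f x = y} \<noteq> 0" by (simp add: supp_def dmap_def)
  then have "{x \<in> supp \<mu>. f x = y} \<noteq> {}" by (metis sum.empty)
  then obtain x where "x \<in> supp \<mu>" "f x = y" by blast
  then show "y \<in> f ` supp \<mu>" by blast
qed

lemma finite_supp_dmap: "finite (supp \<mu>) \<Longrightarrow> finite (supp (dmap f \<mu>))"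
  by (rule finite_subset[OF supp_dmap]) simp

lemma finite_supp_dpoint: "finite (supp (dpoint x))"
proof -
  have "supp (dpoint x) \<subseteq> {x}" by (auto simp: supp_def dpoint_def)
  then show ?thesis using finite_subset by blast
qed

lemma finite_supp_step:
  assumes "\<forall>a t. is_pdist (A a t)" "step A B c \<mu>"
  shows "finite (supp \<mu>)"
  using assms(2)
proof induction
  case (atom a s)
  have "finite (supp (A a s))" using assms(1) unfolding is_pdist_def by blast
  then show ?case by (rule finite_supp_dmap)
next
  case (pchoice P s \<mu> Q \<nu> p)
  have "supp (\<lambda>x. p * \<mu> x + (1 - p) * \<nu> x) \<subseteq> supp \<mu> \<union> supp \<nu>" by (auto simp: supp_def)
  then show ?case using pchoice finite_subset by blast
qed (simp_all add: finite_supp_dmap finite_supp_dpoint)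

lemma dmap_nonneg: "(\<forall>x. 0 \<le> \<mu> x) \<Longrightarrow> 0 \<le> dmap f \<mu> y"
  by (simp add: dmap_def sum_nonneg)

lemma dmap_nz: assumes "dmap f \<mu> y \<noteq> 0" shows "\<exists>x. \<mu> x \<noteq> 0 \<and> f x = y"
proof -
  have "y \<in> supp (dmap f \<mu>)" using assms by (simp add: supp_def)
  then have "y \<in> f ` supp \<mu>" using supp_dmap[of f \<mu>] by blast
  then obtain x where "x \<in> supp \<mu>" "y = f x" by blast
  then show ?thesis by (auto simp: supp_def)
qed

definition wfc :: "('a,'b,'s) conf \<Rightarrow> bool" where "wfc c = wf_prog (fst c)"

lemma dmap_step_wf:
  assumes "\<forall>x. 0 \<le> \<mu> x" "\<And>x c'. \<mu> x \<noteq> 0 \<Longrightarrow> G x = Inr c' \<Longrightarrow> wfc c'"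
  shows "(\<forall>x. 0 \<le> dmap G \<mu> x) \<and> (\<forall>c'. dmap G \<mu> (Inr c') \<noteq> 0 \<longrightarrow> wfc c')"
proof (intro conjI allI impI)
  fix x show "0 \<le> dmap G \<mu> x" using assms(1) by (rule dmap_nonneg)
next
  fix c' assume "dmap G \<mu> (Inr c') \<noteq> 0"
  from dmap_nz[OF this] obtain x where "\<mu> x \<noteq> 0" "G x = Inr c'" by blast
  then show "wfc c'" by (rule assms(2))
qed

lemma dpoint_wf: "wfc c \<Longrightarrow> (\<forall>x. 0 \<le> dpoint (Inr c) x) \<and> (\<forall>c'. dpoint (Inr c) (Inr c') \<noteq> 0 \<longrightarrow> wfc c')"
  by (simp add: dpoint_def)

lemma dpoint_wf': "(\<forall>x. 0 \<le> (dpoint (Inl s) :: ('a,'b,'s) out) x) \<and> (\<forall>c'. (dpoint (Inl s) :: ('a,'b,'s) out) (Inr c') \<noteq> 0 \<longrightarrow> wfc c')"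
  by (simp add: dpoint_def)

lemma step_wf:
  fixes A :: "'a \<Rightarrow> 's \<Rightarrow> 's dist" and B :: "'b \<Rightarrow> 's \<Rightarrow> bool"
  assumes "\<forall>a t. is_pdist (A a t)" "step A B c \<mu>" "wfc c"
  shows "(\<forall>x. 0 \<le> \<mu> x) \<and> (\<forall>c'. \<mu> (Inr c') \<noteq> 0 \<longrightarrow> wfc c')"
  using assms(2,3)
proof induction
  case (atom a s)
  have "\<forall>x. 0 \<le> A a s x" using assms(1) by (simp add: is_pdist_def)
  moreover have "\<forall>c'::('a,'b,'s) conf. dmap Inl (A a s) (Inr c') \<noteq> 0 \<longrightarrow> wfc c'"
  proof (intro allI impI)
    fix c' :: "('a,'b,'s) conf" assume "dmap Inl (A a s) (Inr c') \<noteq> 0"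
    from dmap_nz[OF this] show "wfc c'" by blast
  qed
  ultimately show ?case by (simp add: dmap_nonneg)
next
  case (skip s) show ?case by (rule dpoint_wf')
next
  case (while_ff b s P) show ?case by (rule dpoint_wf')
next
  case (if_tt b s P Q) show ?case by (rule dpoint_wf) (use if_tt in \<open>simp add: wfc_def\<close>)
next
  case (if_ff b s P Q) show ?case by (rule dpoint_wf) (use if_ff in \<open>simp add: wfc_def\<close>)
next
  case (while_tt b s P) show ?case by (rule dpoint_wf) (use while_tt in \<open>simp add: wfc_def\<close>)
next
  case (seq P s \<mu> Q)
  then have ih: "(\<forall>x. 0 \<le> \<mu> x)" "\<forall>c'. \<mu> (Inr c') \<noteq> 0 \<longrightarrow> wfc c'" "wf_prog Q" "wf_prog P"
    by (auto simp: wfc_def)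
  show ?case
  proof (rule dmap_step_wf[OF ih(1)])
    fix x c' assume a: "\<mu> x \<noteq> 0" "case_sum (\<lambda>s'. Inr (Q, s')) (\<lambda>(P', s'). Inr (Seq P' Q, s')) x = Inr c'"
    show "wfc c'"
    proof (cases x)
      case (Inl s') then show ?thesis using a ih by (auto simp: wfc_def)
    next
      case (Inr d) then obtain P' s' where "d = (P', s')" by (cases d)
      then show ?thesis using a ih Inr by (auto simp: wfc_def)
    qed
  qed
next
  case (par_l P s \<mu> Q)
  then have ih: "(\<forall>x. 0 \<le> \<mu> x)" "\<forall>c'. \<mu> (Inr c') \<noteq> 0 \<longrightarrow> wfc c'" "wf_prog Q" "wf_prog P"
    by (auto simp: wfc_def)
  show ?case
  proof (rule dmap_step_wf[OF ih(1)])
    fix x c' assume a: "\<mu> x \<noteq> 0" "case_sum (\<lambda>s'. Inr (Q, s')) (\<lambda>(P', s'). Inr (Par P' Q, s')) x = Inr c'"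
    show "wfc c'"
    proof (cases x)
      case (Inl s') then show ?thesis using a ih by (auto simp: wfc_def)
    next
      case (Inr d) then obtain P' s' where "d = (P', s')" by (cases d)
      then show ?thesis using a ih Inr by (auto simp: wfc_def)
    qed
  qed
next
  case (par_r Q s \<mu> P)
  then have ih: "(\<forall>x. 0 \<le> \<mu> x)" "\<forall>c'. \<mu> (Inr c') \<noteq> 0 \<longrightarrow> wfc c'" "wf_prog Q" "wf_prog P"
    by (auto simp: wfc_def)
  show ?case
  proof (rule dmap_step_wf[OF ih(1)])
    fix x c' assume a: "\<mu> x \<noteq> 0" "case_sum (\<lambda>s'. Inr (P, s')) (\<lambda>(Q', s'). Inr (Par P Q', s')) x = Inr c'"
    show "wfc c'"
    proof (cases x)
      case (Inl s') then show ?thesis using a ih by (auto simp: wfc_def)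
    next
      case (Inr d) then obtain Q' s' where "d = (Q', s')" by (cases d)
      then show ?thesis using a ih Inr by (auto simp: wfc_def)
    qed
  qed
next
  case (pchoice P s \<mu> Q \<nu> p)
  from pchoice.prems have w: "0 \<le> p" "p \<le> 1" "wfc (P,s)" "wfc (Q,s)" by (simp_all add: wfc_def)
  have h1: "\<forall>x. 0 \<le> \<mu> x" "\<forall>c'. \<mu> (Inr c') \<noteq> 0 \<longrightarrow> wfc c'" using pchoice.IH(1)[OF w(3)] by simp_all
  have h2: "\<forall>x. 0 \<le> \<nu> x" "\<forall>c'. \<nu> (Inr c') \<noteq> 0 \<longrightarrow> wfc c'" using pchoice.IH(2)[OF w(4)] by simp_all
  show ?case
  proof (intro conjI allI impI)
    fix x
    have "0 \<le> p * \<mu> x" using w(1) h1(1) by simp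
    moreover have "0 \<le> (1 - p) * \<nu> x" using w(2) h2(1) by simp
    ultimately show "0 \<le> p * \<mu> x + (1 - p) * \<nu> x" by linarith
  next
    fix c' assume "p * \<mu> (Inr c') + (1 - p) * \<nu> (Inr c') \<noteq> 0"
    then have "\<mu> (Inr c') \<noteq> 0 \<or> \<nu> (Inr c') \<noteq> 0" by auto
    then show "wfc c'" using h1 h2 by blast
  qed
next
  case (nchoice_l P s \<mu> Q)
  then show ?case by (simp add: wfc_def)
next
  case (nchoice_r Q s \<mu> P)
  then show ?case by (simp add: wfc_def)
qed

type_synonym ('a,'b,'s) wt = "('a,'b,'s) conf list \<times> ('a,'b,'s) out \<Rightarrow> real"

context
  fixes A :: "'a \<Rightarrow> 's \<Rightarrow> 's dist" and B :: "'b \<Rightarrow> 's \<Rightarrow> bool"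
begin

definition G :: "('a,'b,'s) conf \<Rightarrow> ('a,'b,'s) conf set" where
  "G c = (\<Union>l\<in>stepset A B c. {c'. l (Inr c') \<noteq> 0})"

definition E :: "('a,'b,'s) conf \<Rightarrow> ('a,'b,'s) out \<Rightarrow> (('a,'b,'s) conf \<Rightarrow> 's \<Rightarrow> real) \<Rightarrow> 's \<Rightarrow> real" where
  "E c l f t = l (Inl t) + (\<Sum>c'\<in>G c. l (Inr c') * f c' t)"

definition validW :: "('a,'b,'s) wt \<Rightarrow> bool" where
  "validW W \<longleftrightarrow> (\<forall>q. (\<forall>l. 0 \<le> W (q,l)) \<and> (\<forall>l. l \<notin> stepset A B (hd q) \<longrightarrow> W (q,l) = 0)
      \<and> (\<Sum>l\<in>stepset A B (hd q). W (q,l)) = 1)"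

primrec Val :: "nat \<Rightarrow> ('a,'b,'s) wt \<Rightarrow> ('a,'b,'s) conf list \<Rightarrow> 's \<Rightarrow> real" where
  "Val 0 W q = (\<lambda>_. 0)"
| "Val (Suc n) W q = (\<lambda>t. \<Sum>l\<in>stepset A B (hd q). W (q,l) * E (hd q) l (\<lambda>c'. Val n W (c' # q)) t)"

lemma E_lin:
  assumes "finite I"
  shows "(\<Sum>i\<in>I. a i * E c (l i) f t) = E c (\<lambda>x. \<Sum>i\<in>I. a i * l i x) f t"
proof -
  have "(\<Sum>i\<in>I. a i * E c (l i) f t) = (\<Sum>i\<in>I. a i * l i (Inl t)) + (\<Sum>i\<in>I. \<Sum>c'\<in>G c. a i * l i (Inr c') * f c' t)"
    by (simp add: E_def distrib_left sum.distrib sum_distrib_left mult.assoc)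
  also have "(\<Sum>i\<in>I. \<Sum>c'\<in>G c. a i * l i (Inr c') * f c' t) = (\<Sum>c'\<in>G c. \<Sum>i\<in>I. a i * l i (Inr c') * f c' t)"
    by (rule sum.swap)
  also have "\<dots> = (\<Sum>c'\<in>G c. (\<Sum>i\<in>I. a i * l i (Inr c')) * f c' t)"
    by (simp add: sum_distrib_right)
  finally show ?thesis by (simp add: E_def)
qed

lemma Val_local:
  assumes "\<forall>q' l. (\<exists>zs. q' = zs @ q) \<longrightarrow> W (q',l) = W' (q',l)"
  shows "Val n W q = Val n W' q"
  using assms
proof (induction n arbitrary: q)
  case 0 then show ?case by simp
next
  case (Suc n)
  have ch: "Val n W (c' # q) = Val n W' (c' # q)" for c'
  proof (rule Suc.IH, intro allI impI)
    fix q' l assume "\<exists>zs. q' = zs @ c' # q"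
    then obtain zs where "q' = zs @ c' # q" by blast
    then have "q' = (zs @ [c']) @ q" by simp
    then show "W (q',l) = W' (q',l)" using Suc.prems by blast
  qed
  have rt: "W (q,l) = W' (q,l)" for l using Suc.prems by (metis append_Nil)
  show ?case by (simp add: ch rt)
qed

lemma Val_cont: "continuous_on UNIV (\<lambda>W. Val n W q t)"
proof (induction n arbitrary: q)
  case 0 then show ?case by simp
next
  case (Suc n)
  have e: "continuous_on UNIV (\<lambda>W. E (hd q) l (\<lambda>c'. Val n W (c' # q)) t)" for l
    unfolding E_def by (intro continuous_intros Suc.IH)
  have p: "continuous_on UNIV (\<lambda>W::('a,'b,'s) wt. W (q,l))" for l
    by (rule continuous_on_product_coordinates)
  show ?case by (simp, intro continuous_intros p e)
qed

end

context
  fixes A :: "'a \<Rightarrow> 's \<Rightarrow> 's dist" and B :: "'b \<Rightarrow> 's \<Rightarrow> bool"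
  assumes pd: "\<forall>a t. is_pdist (A a t)"
begin

lemma finite_G: "finite (G A B c)"
  unfolding G_def
proof (rule finite_UN_I)
  show "finite (stepset A B c)" by (rule finite_stepset')
  fix l assume "l \<in> stepset A B c"
  then have "finite (supp l)" using finite_supp_step[OF pd] by (simp add: stepset_def)
  moreover have "{c'. l (Inr c') \<noteq> 0} = Inr -` supp l" by (auto simp: supp_def)
  ultimately show "finite {c'. l (Inr c') \<noteq> 0}" by (simp add: finite_vimageI)
qed

lemma supp_sum:
  assumes "l \<in> stepset A B c"
  shows "(\<Sum>c'\<in>{c'. l (Inr c') \<noteq> 0}. l (Inr c') * g c') = (\<Sum>c'\<in>G A B c. l (Inr c') * g c')"
  by (rule sum.mono_neutral_left[OF finite_G]) (use assms in \<open>auto simp: G_def\<close>)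

lemma step_child_wf: assumes "wfc c" "l \<in> stepset A B c" "l (Inr c') \<noteq> 0" shows "wfc c'"
proof -
  have "step A B c l" using assms(2) by (simp add: stepset_def)
  from step_wf[OF pd this assms(1)] show ?thesis using assms(3) by blast
qed

lemma step_nonneg: assumes "wfc c" "l \<in> stepset A B c" shows "0 \<le> l x"
proof -
  have "step A B c l" using assms(2) by (simp add: stepset_def)
  from step_wf[OF pd this assms(1)] show ?thesis by blast
qed

lemma E_nonneg:
  assumes "wfc c" "l \<in> stepset A B c" "\<And>c'. l (Inr c') \<noteq> 0 \<Longrightarrow> 0 \<le> f c' t"
  shows "0 \<le> E A B c l f t"
  unfolding E_def
proof (rule add_nonneg_nonneg)
  show "0 \<le> l (Inl t)" using step_nonneg[OF assms(1,2)] .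
  show "0 \<le> (\<Sum>c'\<in>G A B c. l (Inr c') * f c' t)"
  proof (rule sum_nonneg)
    fix c' show "0 \<le> l (Inr c') * f c' t"
      using step_nonneg[OF assms(1,2), of "Inr c'"] assms(3)[of c'] by (cases "l (Inr c') = 0") auto
  qed
qed

lemma E_mono:
  assumes "wfc c" "l \<in> stepset A B c" "\<And>c'. l (Inr c') \<noteq> 0 \<Longrightarrow> f c' t \<le> g c' t"
  shows "E A B c l f t \<le> E A B c l g t"
  unfolding E_def
proof -
  have "(\<Sum>c'\<in>G A B c. l (Inr c') * f c' t) \<le> (\<Sum>c'\<in>G A B c. l (Inr c') * g c' t)"
  proof (rule sum_mono)
    fix c' show "l (Inr c') * f c' t \<le> l (Inr c') * g c' t"
      using step_nonneg[OF assms(1,2), of "Inr c'"] assms(3)[of c'] by (cases "l (Inr c') = 0") (auto intro: mult_left_mono)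
  qed
  then show "l (Inl t) + (\<Sum>c'\<in>G A B c. l (Inr c') * f c' t) \<le> l (Inl t) + (\<Sum>c'\<in>G A B c. l (Inr c') * g c' t)"
    by simp
qed

lemma validW_nonneg: "validW A B W \<Longrightarrow> 0 \<le> W (q,l)"
  by (simp add: validW_def)

lemma Val_Suc': "Val A B (Suc n) W q t = (\<Sum>l\<in>stepset A B (hd q). W (q,l) * E A B (hd q) l (\<lambda>c'. Val A B n W (c' # q)) t)"
  by simp

lemma Val_mono:
  assumes "validW A B W" "wfc (hd q)"
  shows "0 \<le> Val A B n W q t \<and> Val A B n W q t \<le> Val A B (Suc n) W q t"
  using assms(2)
proof (induction n arbitrary: q)
  case 0
  have "0 \<le> (\<Sum>l\<in>stepset A B (hd q). W (q,l) * E A B (hd q) l (\<lambda>c'. Val A B 0 W (c' # q)) t)"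
  proof (rule sum_nonneg)
    fix l assume l: "l \<in> stepset A B (hd q)"
    have "0 \<le> E A B (hd q) l (\<lambda>c'. Val A B 0 W (c' # q)) t"
      by (rule E_nonneg[OF 0 l]) simp
    then show "0 \<le> W (q,l) * E A B (hd q) l (\<lambda>c'. Val A B 0 W (c' # q)) t"
      using validW_nonneg[OF assms(1)] by simp
  qed
  then have "0 \<le> Val A B (Suc 0) W q t" by (simp only: Val_Suc')
  then show ?case by simp
next
  case (Suc n)
  have ch: "0 \<le> Val A B n W (c' # q) t \<and> Val A B n W (c' # q) t \<le> Val A B (Suc n) W (c' # q) t"
    if "l \<in> stepset A B (hd q)" "l (Inr c') \<noteq> 0" for l c'
    using Suc.IH[of "c' # q"] step_child_wf[OF Suc.prems that] by simp
  have a: "0 \<le> (\<Sum>l\<in>stepset A B (hd q). W (q,l) * E A B (hd q) l (\<lambda>c'. Val A B n W (c' # q)) t)"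
  proof (rule sum_nonneg)
    fix l assume l: "l \<in> stepset A B (hd q)"
    have "0 \<le> E A B (hd q) l (\<lambda>c'. Val A B n W (c' # q)) t"
      by (rule E_nonneg[OF Suc.prems l]) (use ch[OF l] in blast)
    then show "0 \<le> W (q,l) * E A B (hd q) l (\<lambda>c'. Val A B n W (c' # q)) t"
      using validW_nonneg[OF assms(1)] by simp
  qed
  have b: "(\<Sum>l\<in>stepset A B (hd q). W (q,l) * E A B (hd q) l (\<lambda>c'. Val A B n W (c' # q)) t)
     \<le> (\<Sum>l\<in>stepset A B (hd q). W (q,l) * E A B (hd q) l (\<lambda>c'. Val A B (Suc n) W (c' # q)) t)"
  proof (rule sum_mono)
    fix l assume l: "l \<in> stepset A B (hd q)"
    have "E A B (hd q) l (\<lambda>c'. Val A B n W (c' # q)) t \<le> E A B (hd q) l (\<lambda>c'. Val A B (Suc n) W (c' # q)) t"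
      by (rule E_mono[OF Suc.prems l]) (use ch[OF l] in blast)
    then show "W (q,l) * E A B (hd q) l (\<lambda>c'. Val A B n W (c' # q)) t \<le> W (q,l) * E A B (hd q) l (\<lambda>c'. Val A B (Suc n) W (c' # q)) t"
      using validW_nonneg[OF assms(1)] by (rule mult_left_mono) 
  qed
  show ?case using a b by (simp only: Val_Suc')
qed

lemma Val_le:
  assumes "validW A B W" "wfc (hd q)" "n \<le> m"
  shows "Val A B n W q t \<le> Val A B m W q t"
  using lift_Suc_mono_le[of "\<lambda>n. Val A B n W q t", OF _ assms(3)] Val_mono[OF assms(1,2)] by blast

end

context
  fixes A :: "'a \<Rightarrow> 's \<Rightarrow> 's dist" and B :: "'b \<Rightarrow> 's \<Rightarrow> bool"
begin

primrec Rs :: "nat \<Rightarrow> ('a,'b,'s) conf list \<Rightarrow> 's set" where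
  "Rs 0 q = {}"
| "Rs (Suc n) q = (\<Union>l\<in>stepset A B (hd q). {t. l (Inl t) \<noteq> 0}) \<union> (\<Union>c'\<in>G A B (hd q). Rs n (c' # q))"

end

context
  fixes A :: "'a \<Rightarrow> 's \<Rightarrow> 's dist" and B :: "'b \<Rightarrow> 's \<Rightarrow> bool"
  assumes pd: "\<forall>a t. is_pdist (A a t)"
begin

lemma finite_Rs: "finite (Rs A B n q)"
proof (induction n arbitrary: q)
  case 0 then show ?case by simp
next
  case (Suc n)
  have "finite {t. l (Inl t) \<noteq> 0}" if "l \<in> stepset A B (hd q)" for l
  proof -
    have "finite (supp l)" using finite_supp_step[OF pd] that by (simp add: stepset_def)
    moreover have "{t. l (Inl t) \<noteq> 0} = Inl -` supp l" by (auto simp: supp_def)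
    ultimately show ?thesis by (simp add: finite_vimageI)
  qed
  then have f1: "finite (\<Union>l\<in>stepset A B (hd q). {t. l (Inl t) \<noteq> 0})"
    by (intro finite_UN_I finite_stepset')
  have f2: "finite (\<Union>c'\<in>G A B (hd q). Rs A B n (c' # q))"
    by (intro finite_UN_I finite_G[OF pd] Suc.IH)
  show ?case using f1 f2 by simp
qed

lemma Val_supp: "Val A B n W q t \<noteq> 0 \<Longrightarrow> t \<in> Rs A B n q"
proof (induction n arbitrary: q)
  case 0 then show ?case by simp
next
  case (Suc n)
  show ?case
  proof (rule ccontr)
    assume "t \<notin> Rs A B (Suc n) q"
    then have h1: "\<forall>l\<in>stepset A B (hd q). l (Inl t) = 0" and h2: "\<forall>c'\<in>G A B (hd q). Val A B n W (c' # q) t = 0"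
      using Suc.IH by auto
    have "E A B (hd q) l (\<lambda>c'. Val A B n W (c' # q)) t = 0" if "l \<in> stepset A B (hd q)" for l
      using h1 h2 that by (simp add: E_def)
    then have "Val A B (Suc n) W q t = 0" by simp
    then show False using Suc.prems by simp
  qed
qed

end

definition schedW :: "('a \<Rightarrow> 's \<Rightarrow> 's dist) \<Rightarrow> ('b \<Rightarrow> 's \<Rightarrow> bool) \<Rightarrow> ('a,'b,'s) wt \<Rightarrow> ('a,'b,'s) sched" where
  "schedW A B W = (\<lambda>(h, c). Some (\<lambda>x. \<Sum>l\<in>stepset A B c. W (c # rev (map fst h), l) * l x))"

lemma decomp_exists:
  assumes "\<forall>l. 0 \<le> W l" "(\<Sum>l\<in>stepset A B c. W l) = 1"
  shows "\<exists>K w \<nu>. convex_decomp A B c (\<lambda>x. \<Sum>l\<in>stepset A B c. W l * l x) K w \<nu>"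
proof -
  obtain e where e: "bij_betw e {0..<card (stepset A B c)} (stepset A B c)"
    using ex_bij_betw_nat_finite[OF finite_stepset'] by blast
  then have e': "bij_betw e {..<card (stepset A B c)} (stepset A B c)" by (simp add: atLeast0LessThan)
  define K where "K = card (stepset A B c)"
  have "convex_decomp A B c (\<lambda>x. \<Sum>l\<in>stepset A B c. W l * l x) K (\<lambda>k. W (e k)) e"
    unfolding convex_decomp_def
  proof (intro conjI allI impI)
    fix k assume "k < K"
    then have "e k \<in> stepset A B c" using e' K_def by (auto dest: bij_betw_apply)
    then show "step A B c (e k)" by (simp add: stepset_def)
    show "0 \<le> W (e k)" using assms(1) by simp
  next
    show "(\<Sum>k<K. W (e k)) = 1" using sum.reindex_bij_betw[OF e', of W] assms(2) K_def by simp
  next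
    show "(\<lambda>x. \<Sum>l\<in>stepset A B c. W l * l x) = (\<lambda>x. \<Sum>k<K. W (e k) * e k x)"
    proof
      fix x show "(\<Sum>l\<in>stepset A B c. W l * l x) = (\<Sum>k<K. W (e k) * e k x)"
        using sum.reindex_bij_betw[OF e', of "\<lambda>l. W l * l x"] K_def by simp
    qed
  qed
  then show ?thesis by blast
qed

lemma schedW_is_scheduler:
  assumes "validW A B W"
  shows "is_scheduler A B (schedW A B W)"
  unfolding is_scheduler_def
proof (intro allI impI)
  fix h c v assume "schedW A B W (h, c) = Some v"
  then have v: "v = (\<lambda>x. \<Sum>l\<in>stepset A B c. W (c # rev (map fst h), l) * l x)"
    by (simp add: schedW_def)
  have vq: "(\<forall>l. 0 \<le> W (c # rev (map fst h),l)) \<and> (\<Sum>l\<in>stepset A B (hd (c # rev (map fst h))). W (c # rev (map fst h),l)) = 1"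
    using assms unfolding validW_def by blast
  then have "\<forall>l. 0 \<le> W (c # rev (map fst h), l)" "(\<Sum>l\<in>stepset A B c. W (c # rev (map fst h), l)) = 1" by simp_all
  from decomp_exists[of "\<lambda>l. W (c # rev (map fst h), l)", OF this] show "\<exists>K w \<nu>. convex_decomp A B c v K w \<nu>"
    using v by simp
qed

context
  fixes A :: "'a \<Rightarrow> 's \<Rightarrow> 's dist" and B :: "'b \<Rightarrow> 's \<Rightarrow> bool"
  assumes pd: "\<forall>a t. is_pdist (A a t)"
begin

lemma schedW_det:
  assumes "bigstep A B (schedW A B W) n h c \<mu>"
  shows "\<mu> = Val A B n W (c # rev (map fst h))"
  using assms
proof induction
  case (zero h c)
  then show ?case by simp
next
  case (succ h c v K w \<nu> n m)
  define q where "q = c # rev (map fst h)"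
  define f where "f = (\<lambda>c'. Val A B n W (c' # q))"
  have v: "v = (\<lambda>x. \<Sum>l\<in>stepset A B c. W (q, l) * l x)"
    using succ.hyps(1) by (simp add: schedW_def q_def)
  have dec: "\<forall>k<K. 0 \<le> w k \<and> step A B c (\<nu> k)" "v = (\<lambda>x. \<Sum>k<K. w k * \<nu> k x)"
    using succ.hyps(2) by (simp_all add: convex_decomp_def)
  have inner: "(\<Sum>c'\<in>{c'. \<nu> k (Inr c') \<noteq> 0}. \<nu> k (Inr c') * m k c' t) + \<nu> k (Inl t) = E A B c (\<nu> k) f t"
    if k: "k < K" for k t
  proof -
    have st: "\<nu> k \<in> stepset A B c" using dec(1) k by (simp add: stepset_def)
    have "(\<Sum>c'\<in>{c'. \<nu> k (Inr c') \<noteq> 0}. \<nu> k (Inr c') * m k c' t) = (\<Sum>c'\<in>{c'. \<nu> k (Inr c') \<noteq> 0}. \<nu> k (Inr c') * f c' t)"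
    proof (rule sum.cong[OF refl])
      fix c' assume "c' \<in> {c'. \<nu> k (Inr c') \<noteq> 0}"
      then have "m k c' = Val A B n W (c' # rev (map fst (h @ [(c, \<nu> k)])))" using succ.IH k by blast
      then show "\<nu> k (Inr c') * m k c' t = \<nu> k (Inr c') * f c' t" by (simp add: f_def q_def)
    qed
    also have "\<dots> = (\<Sum>c'\<in>G A B c. \<nu> k (Inr c') * f c' t)" by (rule supp_sum[OF pd st])
    finally show ?thesis by (simp add: E_def)
  qed
  show ?case
  proof
    fix t
    have "(\<Sum>k<K. w k * ((\<Sum>c'\<in>{c'. \<nu> k (Inr c') \<noteq> 0}. \<nu> k (Inr c') * m k c' t) + \<nu> k (Inl t)))
        = (\<Sum>k<K. w k * E A B c (\<nu> k) f t)" using inner by simp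
    also have "\<dots> = E A B c v f t" using E_lin[where A=A and B=B and I="{..<K}" and a=w and c=c and l=\<nu> and f=f and t=t] dec(2) by simp
    also have "\<dots> = (\<Sum>l\<in>stepset A B c. W (q, l) * E A B c l f t)"
      using E_lin[where A=A and B=B and I="stepset A B c" and a="\<lambda>l. W (q, l)" and c=c and l="\<lambda>l. l" and f=f and t=t, OF finite_stepset'] v by simp
    also have "\<dots> = Val A B (Suc n) W q t" by (simp add: q_def f_def)
    finally show "(\<Sum>k<K. w k * ((\<Sum>c'\<in>{c'. \<nu> k (Inr c') \<noteq> 0}. \<nu> k (Inr c') * m k c' t) + \<nu> k (Inl t)))
        = Val A B (Suc n) W (c # rev (map fst h)) t" by (simp add: q_def)
  qed
qed

lemma schedW_ex:
  assumes "validW A B W"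
  shows "\<exists>\<mu>. bigstep A B (schedW A B W) n h c \<mu>"
proof (induction n arbitrary: h c)
  case 0 then show ?case by (blast intro: bigstep.zero)
next
  case (Suc n)
  define q where "q = c # rev (map fst h)"
  define v where "v = (\<lambda>x. \<Sum>l\<in>stepset A B c. W (q, l) * l x)"
  have vq: "(\<forall>l. 0 \<le> W (q,l)) \<and> (\<Sum>l\<in>stepset A B (hd q). W (q,l)) = 1"
    using assms unfolding validW_def by blast
  then have "\<forall>l. 0 \<le> W (q, l)" "(\<Sum>l\<in>stepset A B c. W (q, l)) = 1" by (simp_all add: q_def)
  from decomp_exists[of "\<lambda>l. W (q, l)", OF this] obtain K w \<nu> where d: "convex_decomp A B c v K w \<nu>"
    unfolding v_def by blast
  define m where "m = (\<lambda>k c'. SOME \<mu>. bigstep A B (schedW A B W) n (h @ [(c, \<nu> k)]) c' \<mu>)"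
  have "bigstep A B (schedW A B W) n (h @ [(c, \<nu> k)]) c' (m k c')" for k c'
    unfolding m_def using Suc.IH by (rule someI_ex)
  moreover have "schedW A B W (h, c) = Some v" by (simp add: schedW_def v_def q_def)
  ultimately show ?case using bigstep.succ[OF _ d] by blast
qed

lemma schedW_nonblocking: "validW A B W \<Longrightarrow> non_blocking A B (schedW A B W) c"
  unfolding non_blocking_def using schedW_ex by blast

end

context
  fixes A :: "'a \<Rightarrow> 's \<Rightarrow> 's dist" and B :: "'b \<Rightarrow> 's \<Rightarrow> bool"
begin

definition validrow :: "('a,'b,'s) conf \<Rightarrow> (('a,'b,'s) out \<Rightarrow> real) \<Rightarrow> bool" where
  "validrow c r \<longleftrightarrow> (\<forall>l. 0 \<le> r l) \<and> (\<forall>l. l \<notin> stepset A B c \<longrightarrow> r l = 0) \<and> (\<Sum>l\<in>stepset A B c. r l) = 1"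

lemma validW_row: "validW A B W \<longleftrightarrow> (\<forall>q. validrow (hd q) (\<lambda>l. W (q,l)))"
  by (simp add: validW_def validrow_def)

definition glue :: "('a,'b,'s) conf list \<Rightarrow> (('a,'b,'s) out \<Rightarrow> real) \<Rightarrow> (('a,'b,'s) conf \<Rightarrow> ('a,'b,'s) wt) \<Rightarrow> ('a,'b,'s) wt" where
  "glue p r Wc = (\<lambda>(q,l). if q = p then r l
      else if length p < length q \<and> drop (length q - length p) q = p then Wc (q ! (length q - Suc (length p))) (q,l)
      else Wc (hd q) (q,l))"

lemma glue_valid:
  assumes "validrow (hd p) r" "\<forall>c'. validW A B (Wc c')"
  shows "validW A B (glue p r Wc)"
  unfolding validW_row
proof
  fix q
  show "validrow (hd q) (\<lambda>l. glue p r Wc (q, l))"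
  proof (cases "q = p")
    case True then show ?thesis using assms(1) by (simp add: glue_def)
  next
    case False
    have hv: "\<And>x. validrow (hd q) (\<lambda>l. Wc x (q,l))" using assms(2) unfolding validW_row by blast
    define x where "x = (if length p < length q \<and> drop (length q - length p) q = p then q ! (length q - Suc (length p)) else hd q)"
    have "(\<lambda>l. glue p r Wc (q,l)) = (\<lambda>l. Wc x (q,l))" using False by (auto simp: glue_def x_def)
    then show ?thesis using hv by simp
  qed
qed

lemma glue_child: "Val A B n (glue p r Wc) (c' # p) = Val A B n (Wc c') (c' # p)"
proof (rule Val_local, intro allI impI)
  fix q' l assume "\<exists>zs. q' = zs @ c' # p"
  then obtain zs where q': "q' = zs @ c' # p" by blast
  have ne: "q' \<noteq> p" using q' by (auto dest: arg_cong[of _ _ length])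
  have l: "length p < length q'" using q' by simp
  have d: "drop (length q' - length p) q' = p" using q' by simp
  have i: "q' ! (length q' - Suc (length p)) = c'" using q' by (simp add: nth_append)
  show "glue p r Wc (q', l) = Wc c' (q', l)" using ne l d i by (simp add: glue_def)
qed

lemma glue_root: "glue p r Wc (p, l) = r l"
  by (simp add: glue_def)

lemma Val_glue:
  "Val A B (Suc n) (glue p r Wc) p t = (\<Sum>l\<in>stepset A B (hd p). r l * E A B (hd p) l (\<lambda>c'. Val A B n (Wc c') (c' # p)) t)"
  by (simp add: glue_root glue_child)

lemma E_combine:
  assumes "finite I" "\<And>x. V x = (\<Sum>i\<in>I. a i * U i x)"
    and "\<And>c'. c' \<in> G A B c \<Longrightarrow> V (Inr c') * F c' t = (\<Sum>i\<in>I. a i * U i (Inr c') * Fi i c' t)"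
  shows "E A B c V F t = (\<Sum>i\<in>I. a i * E A B c (U i) (Fi i) t)"
proof -
  have "(\<Sum>i\<in>I. a i * E A B c (U i) (Fi i) t) = (\<Sum>i\<in>I. a i * U i (Inl t)) + (\<Sum>i\<in>I. \<Sum>c'\<in>G A B c. a i * U i (Inr c') * Fi i c' t)"
    by (simp add: E_def distrib_left sum.distrib sum_distrib_left mult.assoc)
  also have "(\<Sum>i\<in>I. \<Sum>c'\<in>G A B c. a i * U i (Inr c') * Fi i c' t) = (\<Sum>c'\<in>G A B c. \<Sum>i\<in>I. a i * U i (Inr c') * Fi i c' t)"
    by (rule sum.swap)
  also have "\<dots> = (\<Sum>c'\<in>G A B c. V (Inr c') * F c' t)"
    using assms(3) by simp
  finally show ?thesis by (simp add: E_def assms(2))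
qed

lemma exW: "\<exists>W. validW A B W"
proof -
  define W :: "('a,'b,'s) wt" where "W = (\<lambda>(q,l). if l = (SOME l. l \<in> stepset A B (hd q)) then 1 else 0)"
  have mem: "(SOME l. l \<in> stepset A B (hd q)) \<in> stepset A B (hd q)" for q
    using stepset_nonempty by (metis ex_in_conv someI_ex)
  then have sm: "(\<Sum>l\<in>stepset A B (hd q). if l = (SOME l. l \<in> stepset A B (hd q)) then 1 else 0) = (1::real)" for q
    using sum.delta[OF finite_stepset', of "SOME l. l \<in> stepset A B (hd q)" "\<lambda>_. 1::real"] by simp
  have "validW A B W"
    unfolding validW_def
  proof (intro allI conjI)
    fix q l
    show "0 \<le> W (q,l)" by (simp add: W_def)
    show "l \<notin> stepset A B (hd q) \<longrightarrow> W (q,l) = 0" using mem[of q] by (auto simp: W_def)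
    show "(\<Sum>l\<in>stepset A B (hd q). W (q,l)) = 1" using sm[of q] by (simp add: W_def)
  qed
  then show ?thesis by blast
qed

end

context
  fixes A :: "'a \<Rightarrow> 's \<Rightarrow> 's dist" and B :: "'b \<Rightarrow> 's \<Rightarrow> bool"
  assumes pd: "\<forall>a t. is_pdist (A a t)"
begin

lemma conv:
  fixes I :: "'i set" and Wf :: "'i \<Rightarrow> ('a,'b,'s) wt"
  assumes fin: "finite I"
  shows "wfc (hd p) \<Longrightarrow> (\<forall>i\<in>I. 0 \<le> a i) \<Longrightarrow> sum a I = 1 \<Longrightarrow> (\<forall>i\<in>I. validW A B (Wf i)) \<Longrightarrow>
    \<exists>W. validW A B W \<and> Val A B n W p = (\<lambda>t. \<Sum>i\<in>I. a i * Val A B n (Wf i) p t)"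
proof (induction n arbitrary: p a)
  case 0
  obtain W where "validW A B W" using exW by blast
  then show ?case by auto
next
  case (Suc n)
  note wf = Suc.prems(1) and ann = Suc.prems(2) and asum = Suc.prems(3) and vW = Suc.prems(4)
  define c where "c = hd p"
  obtain W0 where W0: "validW A B W0" using exW by blast
  define r where "r l = (\<Sum>i\<in>I. a i * Wf i (p,l))" for l
  have rowi: "validrow A B c (\<lambda>l. Wf i (p,l))" if "i \<in> I" for i
    using vW that unfolding validW_row c_def by blast
  have rv: "validrow A B c r"
    unfolding validrow_def
  proof (intro conjI allI impI)
    fix l show "0 \<le> r l" unfolding r_def using ann rowi by (auto intro!: sum_nonneg simp: validrow_def)
  next
    fix l assume "l \<notin> stepset A B c" then show "r l = 0" unfolding r_def using rowi by (simp add: validrow_def)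
  next
    have "(\<Sum>l\<in>stepset A B c. r l) = (\<Sum>i\<in>I. a i * (\<Sum>l\<in>stepset A B c. Wf i (p,l)))"
      unfolding r_def by (simp add: sum.swap[of _ I] sum_distrib_left)
    also have "\<dots> = (\<Sum>i\<in>I. a i)" using rowi by (simp add: validrow_def)
    finally show "(\<Sum>l\<in>stepset A B c. r l) = 1" using asum by simp
  qed
  define U where "U i x = (\<Sum>l\<in>stepset A B c. Wf i (p,l) * l x)" for i x
  define V where "V x = (\<Sum>i\<in>I. a i * U i x)" for x
  have VU: "(\<lambda>x. \<Sum>l\<in>stepset A B c. r l * l x) = V"
  proof
    fix x
    have "(\<Sum>l\<in>stepset A B c. r l * l x) = (\<Sum>l\<in>stepset A B c. \<Sum>i\<in>I. a i * Wf i (p,l) * l x)"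
      unfolding r_def by (simp add: sum_distrib_right)
    also have "\<dots> = (\<Sum>i\<in>I. \<Sum>l\<in>stepset A B c. a i * Wf i (p,l) * l x)" by (rule sum.swap)
    also have "\<dots> = V x" unfolding V_def U_def by (simp add: sum_distrib_left mult.assoc)
    finally show "(\<Sum>l\<in>stepset A B c. r l * l x) = V x" .
  qed
  have Unn: "0 \<le> U i x" if "i \<in> I" for i x
    unfolding U_def
  proof (rule sum_nonneg)
    fix l assume "l \<in> stepset A B c"
    then show "0 \<le> Wf i (p,l) * l x" using step_nonneg[OF pd wf[folded c_def]] rowi[OF that]
      by (simp add: validrow_def)
  qed
  have termnn: "0 \<le> a i * U i x" if "i \<in> I" for i x using mult_nonneg_nonneg[OF bspec[OF ann that] Unn[OF that]] .
  define bb where "bb c' i = a i * U i (Inr c') / V (Inr c')" for c' i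
  define Fi where "Fi i c' = Val A B n (Wf i) (c' # p)" for i c'
  define P where "P c' W \<longleftrightarrow> validW A B W \<and> Val A B n W (c' # p) = (\<lambda>t. \<Sum>i\<in>I. bb c' i * Fi i c' t)" for c' W
  have exc: "\<exists>W. P c' W" if "V (Inr c') \<noteq> 0" for c'
  proof -
    have Vpos: "0 < V (Inr c')"
    proof -
      have "0 \<le> V (Inr c')" unfolding V_def by (rule sum_nonneg) (rule termnn)
      then show ?thesis using that by linarith
    qed
    have "\<exists>i\<in>I. U i (Inr c') \<noteq> 0"
    proof (rule ccontr)
      assume "\<not> (\<exists>i\<in>I. U i (Inr c') \<noteq> 0)"
      then have "\<forall>i\<in>I. a i * U i (Inr c') = 0" by simp
      then have "V (Inr c') = 0" unfolding V_def by (simp add: sum.neutral)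
      then show False using that by simp
    qed
    then obtain i where i: "i \<in> I" "U i (Inr c') \<noteq> 0" by blast
    have "\<exists>l\<in>stepset A B c. l (Inr c') \<noteq> 0"
    proof (rule ccontr)
      assume "\<not> (\<exists>l\<in>stepset A B c. l (Inr c') \<noteq> 0)"
      then have "\<forall>l\<in>stepset A B c. Wf i (p,l) * l (Inr c') = 0" by simp
      then have "U i (Inr c') = 0" unfolding U_def by (simp add: sum.neutral)
      then show False using i by simp
    qed
    then obtain l where "l \<in> stepset A B c" "l (Inr c') \<noteq> 0" by blast
    then have wfc': "wfc c'" using step_child_wf[OF pd wf[folded c_def]] by blast
    have bnn: "\<forall>i\<in>I. 0 \<le> bb c' i" unfolding bb_def using termnn Vpos by (simp add: divide_nonneg_pos)
    have bsum: "sum (bb c') I = 1" unfolding bb_def using Vpos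
      by (simp add: sum_divide_distrib[symmetric] V_def)
    from Suc.IH[of "c' # p" "bb c'", OF _ bnn bsum vW] wfc'
    show ?thesis unfolding P_def Fi_def by simp
  qed
  define Wc where "Wc c' = (if V (Inr c') \<noteq> 0 then (SOME W. P c' W) else W0)" for c'
  have Wc: "P c' (Wc c')" if "V (Inr c') \<noteq> 0" for c'
    using exc[OF that] that unfolding Wc_def by (simp add: someI_ex)
  have Wcv: "validW A B (Wc c')" for c'
    using Wc W0 unfolding P_def Wc_def by (cases "V (Inr c') \<noteq> 0") auto
  define W where "W = glue p r Wc"
  have Wv: "validW A B W" unfolding W_def by (rule glue_valid) (use rv Wcv c_def in auto)
  have "Val A B (Suc n) W p t = (\<Sum>i\<in>I. a i * Val A B (Suc n) (Wf i) p t)" for t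
  proof -
    define F where "F c' = Val A B n (Wc c') (c' # p)" for c'
    have "Val A B (Suc n) W p t = (\<Sum>l\<in>stepset A B c. r l * E A B c l F t)"
      unfolding W_def Val_glue F_def c_def ..
    also have "\<dots> = E A B c V F t"
      using E_lin[where A=A and B=B and I="stepset A B c" and a=r and c=c and l="\<lambda>l. l" and f=F and t=t, OF finite_stepset'] VU by simp
    also have "\<dots> = (\<Sum>i\<in>I. a i * E A B c (U i) (Fi i) t)"
    proof (rule E_combine[where A=A and B=B and V=V and a=a and U=U and F=F and Fi=Fi, OF fin])
      show "V x = (\<Sum>i\<in>I. a i * U i x)" for x by (simp add: V_def)
    next
      fix c' assume "c' \<in> G A B c"
      show "V (Inr c') * F c' t = (\<Sum>i\<in>I. a i * U i (Inr c') * Fi i c' t)"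
      proof (cases "V (Inr c') = 0")
        case True
        then have "(\<Sum>i\<in>I. a i * U i (Inr c')) = 0" by (simp add: V_def)
        moreover have "\<forall>i\<in>I. 0 \<le> a i * U i (Inr c')" using termnn by blast
        ultimately have "\<forall>i\<in>I. a i * U i (Inr c') = 0"
          using sum_nonneg_eq_0_iff[OF fin, of "\<lambda>i. a i * U i (Inr c')"] by blast
        then show ?thesis using True by (auto intro!: sum.neutral)
      next
        case False
        then have "F c' t = (\<Sum>i\<in>I. bb c' i * Fi i c' t)" using Wc[OF False] unfolding P_def F_def by simp
        then have "V (Inr c') * F c' t = (\<Sum>i\<in>I. V (Inr c') * (bb c' i * Fi i c' t))" by (simp add: sum_distrib_left)
        also have "\<dots> = (\<Sum>i\<in>I. a i * U i (Inr c') * Fi i c' t)" unfolding bb_def using False by simp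
        finally show ?thesis .
      qed
    qed
    also have "\<dots> = (\<Sum>i\<in>I. a i * Val A B (Suc n) (Wf i) p t)"
    proof (rule sum.cong[OF refl])
      fix i assume "i \<in> I"
      have "Val A B (Suc n) (Wf i) p t = (\<Sum>l\<in>stepset A B c. Wf i (p,l) * E A B c l (Fi i) t)"
        by (simp add: Fi_def[abs_def] c_def)
      also have "\<dots> = E A B c (U i) (Fi i) t"
        using E_lin[where A=A and B=B and I="stepset A B c" and a="\<lambda>l. Wf i (p,l)" and c=c and l="\<lambda>l. l" and f="Fi i" and t=t, OF finite_stepset']
        by (simp add: U_def[abs_def])
      finally show "a i * E A B c (U i) (Fi i) t = a i * Val A B (Suc n) (Wf i) p t" by simp
    qed
    finally show ?thesis .
  qed
  then show ?case using Wv by blast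
qed

lemma bigstep_rep:
  assumes "bigstep A B Sc n h c \<mu>" "wfc c"
  shows "\<exists>W. validW A B W \<and> Val A B n W (c # p) = \<mu>"
  using assms
proof (induction arbitrary: p rule: bigstep.induct)
  case (zero h c)
  obtain W where "validW A B W" using exW by blast
  then show ?case by auto
next
  case (succ h c v K w \<nu> n m)
  obtain W0 where W0: "validW A B W0" using exW by blast
  have dec: "\<forall>k<K. 0 \<le> w k \<and> step A B c (\<nu> k)" "(\<Sum>k<K. w k) = 1"
    using succ.hyps(2) by (simp_all add: convex_decomp_def)
  have st: "\<nu> k \<in> stepset A B c" if "k < K" for k using dec(1) that by (simp add: stepset_def)
  define Q where "Q k c' W \<longleftrightarrow> validW A B W \<and> Val A B n W (c' # c # p) = m k c'" for k c' W
  have exq: "\<exists>W. Q k c' W" if "k < K" "\<nu> k (Inr c') \<noteq> 0" for k c'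
  proof -
    have "wfc c'" using step_child_wf[OF pd succ.prems st[OF that(1)] that(2)] .
    then show ?thesis using succ.IH that unfolding Q_def by blast
  qed
  define Wk where "Wk k c' = (if k < K \<and> \<nu> k (Inr c') \<noteq> 0 then (SOME W. Q k c' W) else W0)" for k c'
  have WkQ: "Q k c' (Wk k c')" if "k < K" "\<nu> k (Inr c') \<noteq> 0" for k c'
    using exq[OF that] that unfolding Wk_def by (simp add: someI_ex)
  have Wkv: "validW A B (Wk k c')" for k c'
    using WkQ W0 unfolding Q_def Wk_def by (cases "k < K \<and> \<nu> k (Inr c') \<noteq> 0") auto
  define Wg where "Wg k = glue (c # p) (\<lambda>l. if l = \<nu> k then 1 else 0) (Wk k)" for k
  have Wgv: "validW A B (Wg k)" if "k < K" for k
    unfolding Wg_def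
  proof (rule glue_valid)
    show "\<forall>c'. validW A B (Wk k c')" using Wkv by blast
    show "validrow A B (hd (c # p)) (\<lambda>l. if l = \<nu> k then 1 else 0)"
      using st[OF that] sum.delta[OF finite_stepset', of "\<nu> k" "\<lambda>_. 1::real"] by (auto simp: validrow_def)
  qed
  have Wgval: "Val A B (Suc n) (Wg k) (c # p) t = (\<Sum>c'\<in>{c'. \<nu> k (Inr c') \<noteq> 0}. \<nu> k (Inr c') * m k c' t) + \<nu> k (Inl t)"
    if k: "k < K" for k t
  proof -
    define F where "F c' = Val A B n (Wk k c') (c' # c # p)" for c'
    have "Val A B (Suc n) (Wg k) (c # p) t = (\<Sum>l\<in>stepset A B c. (if l = \<nu> k then 1 else 0) * E A B c l F t)"
      unfolding Wg_def Val_glue F_def by simp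
    also have "\<dots> = (\<Sum>l\<in>stepset A B c. if l = \<nu> k then E A B c l F t else 0)"
      by (rule sum.cong) auto
    also have "\<dots> = E A B c (\<nu> k) F t"
      using sum.delta[OF finite_stepset'[of A B c], of "\<nu> k" "\<lambda>l. E A B c l F t"] st[OF k] by simp
    also have "\<dots> = \<nu> k (Inl t) + (\<Sum>c'\<in>{c'. \<nu> k (Inr c') \<noteq> 0}. \<nu> k (Inr c') * F c' t)"
      unfolding E_def using supp_sum[OF pd st[OF k], of "\<lambda>c'. F c' t"] by simp
    also have "(\<Sum>c'\<in>{c'. \<nu> k (Inr c') \<noteq> 0}. \<nu> k (Inr c') * F c' t) = (\<Sum>c'\<in>{c'. \<nu> k (Inr c') \<noteq> 0}. \<nu> k (Inr c') * m k c' t)"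
    proof (rule sum.cong[OF refl])
      fix c' assume "c' \<in> {c'. \<nu> k (Inr c') \<noteq> 0}"
      then have "Q k c' (Wk k c')" using WkQ k by blast
      then show "\<nu> k (Inr c') * F c' t = \<nu> k (Inr c') * m k c' t" unfolding Q_def F_def by simp
    qed
    finally show ?thesis by simp
  qed
  have "\<exists>W. validW A B W \<and> Val A B (Suc n) W (c # p) = (\<lambda>t. \<Sum>k\<in>{..<K}. w k * Val A B (Suc n) (Wg k) (c # p) t)"
    by (rule conv) (use succ.prems dec Wgv in auto)
  then obtain W where W: "validW A B W" "Val A B (Suc n) W (c # p) = (\<lambda>t. \<Sum>k\<in>{..<K}. w k * Val A B (Suc n) (Wg k) (c # p) t)"
    by blast
  have "Val A B (Suc n) W (c # p) = (\<lambda>t. \<Sum>k<K. w k * ((\<Sum>c'\<in>{c'. \<nu> k (Inr c') \<noteq> 0}. \<nu> k (Inr c') * m k c' t) + \<nu> k (Inl t)))"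
    using W(2) Wgval by simp
  then show ?case using W(1) by blast
qed

end

lemma vf_up:
  assumes "vformula_den X" "\<forall>t. 0 \<le> \<mu> t" "\<forall>t. \<mu> t \<le> \<mu>' t" "finite (supp \<mu>')"
  shows "val_of \<mu> \<in> X \<Longrightarrow> val_of \<mu>' \<in> X"
  using assms(1)
proof induction
  case (prob p U)
  have ss: "supp \<mu> \<subseteq> supp \<mu>'"
  proof
    fix t assume "t \<in> supp \<mu>"
    then have "\<mu> t \<noteq> 0" by (simp add: supp_def)
    moreover have "0 \<le> \<mu> t" using assms(2) by blast
    ultimately have "0 < \<mu> t" by simp
    then have "0 < \<mu>' t" using assms(3) by (meson order_less_le_trans)
    then show "t \<in> supp \<mu>'" by (simp add: supp_def)
  qed
  have fs: "finite (U \<inter> supp \<mu>)" using ss assms(4) by (meson finite_Int finite_subset)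
  have "sum \<mu> (U \<inter> supp \<mu>) \<le> sum \<mu>' (U \<inter> supp \<mu>)" using assms(3) by (simp add: sum_mono)
  also have "\<dots> \<le> sum \<mu>' (U \<inter> supp \<mu>')"
  proof (rule sum_mono2)
    show "finite (U \<inter> supp \<mu>')" using assms(4) by simp
    show "U \<inter> supp \<mu> \<subseteq> U \<inter> supp \<mu>'" using ss by blast
    fix t show "0 \<le> \<mu>' t" using assms(2,3) by (meson order_trans)
  qed
  finally have "ennreal (sum \<mu> (U \<inter> supp \<mu>)) \<le> ennreal (sum \<mu>' (U \<inter> supp \<mu>'))" by (rule ennreal_leI)
  then show ?case using prob.prems unfolding val_of_def by (auto intro: order_less_le_trans)
next
  case (conj X Y) then show ?case by blast
next
  case (disj F) then show ?case by blast
next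
  case bot then show ?case by simp
next
  case top then show ?case by simp
qed

lemma vf_open:
  fixes F :: "'w::topological_space \<Rightarrow> 's \<Rightarrow> real"
  assumes "vformula_den X" "finite R" "\<forall>W t. t \<notin> R \<longrightarrow> F W t = 0" "\<forall>t. continuous_on UNIV (\<lambda>W. F W t)"
  shows "open {W. val_of (F W) \<in> X}"
  using assms(1)
proof induction
  case (prob p U)
  have eq: "sum (F W) (U \<inter> supp (F W)) = (\<Sum>t\<in>U \<inter> R. F W t)" for W
  proof (rule sum.mono_neutral_left)
    show "finite (U \<inter> R)" using assms(2) by simp
    show "U \<inter> supp (F W) \<subseteq> U \<inter> R" using assms(3) by (auto simp: supp_def)
    show "\<forall>i\<in>U \<inter> R - U \<inter> supp (F W). F W i = 0" by (auto simp: supp_def)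
  qed
  have "{W. val_of (F W) \<in> {\<nu>. ennreal p < \<nu> U}} = {W. p < (\<Sum>t\<in>U \<inter> R. F W t)}"
    using prob.hyps by (simp add: val_of_def eq ennreal_less_iff)
  moreover have "open {W. p < (\<Sum>t\<in>U \<inter> R. F W t)}"
    by (rule open_Collect_less) (auto intro!: continuous_intros assms(4)[rule_format])
  ultimately show ?case by simp
next
  case (conj X Y)
  have "{W. val_of (F W) \<in> X \<inter> Y} = {W. val_of (F W) \<in> X} \<inter> {W. val_of (F W) \<in> Y}" by blast
  then show ?case using conj.IH by (simp add: open_Int)
next
  case (disj FF)
  have "{W. val_of (F W) \<in> \<Union>FF} = (\<Union>X\<in>FF. {W. val_of (F W) \<in> X})" by blast
  then show ?case using disj.IH by (auto intro!: open_UN)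
next
  case bot then show ?case by simp
next
  case top then show ?case by simp
qed

lemma compact_box: "compact {W :: 'i \<Rightarrow> real. \<forall>i. W i \<in> {0..1}}"
proof -
  have "compactin (product_topology (\<lambda>_. euclidean) UNIV) (PiE UNIV (\<lambda>_::'i. {0..1::real}))"
    by (simp add: compactin_PiE)
  then have "compact (PiE UNIV (\<lambda>_::'i. {0..1::real}))"
    by (simp add: euclidean_product_topology)
  moreover have "PiE UNIV (\<lambda>_::'i. {0..1::real}) = {W. \<forall>i. W i \<in> {0..1}}"
    by (auto simp: PiE_UNIV_domain)
  ultimately show ?thesis by simp
qed

lemma compact_valid: "compact {W :: ('a,'b,'s) wt. validW A B W}"
proof -
  have c1: "closed {W :: ('a,'b,'s) wt. \<forall>q l. 0 \<le> W (q,l)}"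
    by (intro closed_Collect_all closed_Collect_le continuous_on_const continuous_on_product_coordinates)
  have c2: "closed {W :: ('a,'b,'s) wt. \<forall>q l. l \<notin> stepset A B (hd q) \<longrightarrow> W (q,l) = 0}"
  proof (intro closed_Collect_all)
    fix q l
    show "closed {W :: ('a,'b,'s) wt. l \<notin> stepset A B (hd q) \<longrightarrow> W (q,l) = 0}"
    proof (cases "l \<in> stepset A B (hd q)")
      case True then show ?thesis by simp
    next
      case False then show ?thesis
        by (simp, intro closed_Collect_eq continuous_on_const continuous_on_product_coordinates)
    qed
  qed
  have c3: "closed {W :: ('a,'b,'s) wt. \<forall>q. (\<Sum>l\<in>stepset A B (hd q). W (q,l)) = 1}"
    by (intro closed_Collect_all closed_Collect_eq continuous_on_const continuous_on_sum continuous_on_product_coordinates)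
  have eq: "{W :: ('a,'b,'s) wt. validW A B W} = {W :: ('a,'b,'s) wt. \<forall>q l. 0 \<le> W (q,l)}
     \<inter> {W. \<forall>q l. l \<notin> stepset A B (hd q) \<longrightarrow> W (q,l) = 0} \<inter> {W. \<forall>q. (\<Sum>l\<in>stepset A B (hd q). W (q,l)) = 1}"
    by (auto simp: validW_def)
  have cl: "closed {W :: ('a,'b,'s) wt. validW A B W}" unfolding eq using c1 c2 c3 by (intro closed_Int)
  have sub: "{W :: ('a,'b,'s) wt. validW A B W} \<subseteq> {W. \<forall>i. W i \<in> {0..1}}"
  proof (safe)
    fix W :: "('a,'b,'s) wt" and i :: "('a,'b,'s) conf list \<times> ('a,'b,'s) out" assume v: "validW A B W"
    obtain q l where i: "i = (q,l)" by (cases i)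
    have h: "\<forall>l. 0 \<le> W (q,l)" "\<forall>l. l \<notin> stepset A B (hd q) \<longrightarrow> W (q,l) = 0" "(\<Sum>l\<in>stepset A B (hd q). W (q,l)) = 1"
      using v unfolding validW_def by blast+
    have "W (q,l) \<le> 1"
    proof (cases "l \<in> stepset A B (hd q)")
      case True
      then have "W (q,l) \<le> (\<Sum>l\<in>stepset A B (hd q). W (q,l))"
        using h(1) by (intro member_le_sum finite_stepset') auto
      then show ?thesis using h(3) by simp
    next
      case False then show ?thesis using h(2) by simp
    qed
    then show "W i \<in> {0..1}" using h(1) i by simp
  qed
  have "compact ({W. \<forall>i. W i \<in> {0..1}} \<inter> {W :: ('a,'b,'s) wt. validW A B W})"
    using compact_box cl by (rule compact_Int_closed)
  moreover have "{W. \<forall>i. W i \<in> {0..1}} \<inter> {W :: ('a,'b,'s) wt. validW A B W} = {W. validW A B W}" using sub by blast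
  ultimately show ?thesis by simp
qed

theorem mainTheorem6:
  fixes A :: "'a \<Rightarrow> 's \<Rightarrow> 's dist" and B :: "'b \<Rightarrow> 's \<Rightarrow> bool"
    and P :: "('a, 'b) prog" and s :: 's and \<phi> :: "('s set \<Rightarrow> ennreal) set"
  assumes "\<forall>a t. is_pdist (A a t)"
    and "wf_prog P"
    and "vformula_den \<phi>"
    and "models_box A B (P, s) \<phi>"
  shows "\<exists>z::nat. z > 0 \<and>
           (\<forall>Sc. is_scheduler A B Sc \<and> non_blocking A B Sc (P, s) \<longrightarrow>
              (\<exists>\<mu>. bigstep A B Sc z [] (P, s) \<mu> \<and> val_of \<mu> \<in> \<phi>))"
proof -
  note pd = assms(1)
  define c0 where "c0 = (P, s)"
  have wf0: "wfc (hd [c0])" using assms(2) by (simp add: wfc_def c0_def)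
  define K where "K = {W :: ('a,'b,'s) wt. validW A B W}"
  define Op where "Op n = {W :: ('a,'b,'s) wt. val_of (Val A B n W [c0]) \<in> \<phi>}" for n
  have opn: "open (Op n)" for n
    unfolding Op_def
  proof (rule vf_open[OF assms(3) finite_Rs[OF pd]])
    show "\<forall>W t. t \<notin> Rs A B n [c0] \<longrightarrow> Val A B n W [c0] t = 0" using Val_supp[OF pd] by blast
    show "\<forall>t. continuous_on UNIV (\<lambda>W. Val A B n W [c0] t)" by (intro allI Val_cont)
  qed
  have cover: "K \<subseteq> (\<Union>n\<in>UNIV. Op n)"
  proof
    fix W assume "W \<in> K"
    then have v: "validW A B W" by (simp add: K_def)
    have "is_scheduler A B (schedW A B W) \<and> non_blocking A B (schedW A B W) (P, s)"
      using schedW_is_scheduler[OF v] schedW_nonblocking[OF pd v] by blast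
    then obtain n \<mu> where nm: "bigstep A B (schedW A B W) n [] (P, s) \<mu>" "val_of \<mu> \<in> \<phi>"
      using assms(4) unfolding models_box_def by blast
    have "\<mu> = Val A B n W [c0]" using schedW_det[OF pd nm(1)] by (simp add: c0_def)
    then show "W \<in> (\<Union>n\<in>UNIV. Op n)" using nm(2) by (auto simp: Op_def)
  qed
  obtain N where N: "N \<subseteq> UNIV" "finite N" "K \<subseteq> (\<Union>n\<in>N. Op n)"
    using compactE_image[OF compact_valid[of A B, folded K_def] opn cover] by blast
  define z where "z = Suc (Max (insert 0 N))"
  have zpos: "z > 0" by (simp add: z_def)
  have allK: "val_of (Val A B z W [c0]) \<in> \<phi>" if "validW A B W" for W
  proof -
    have "W \<in> K" using that by (simp add: K_def)
    then obtain n where n: "n \<in> N" "W \<in> Op n" using N(3) by blast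
    have "n \<le> z" using n(1) N(2) unfolding z_def by (meson Max_ge finite_insert insertCI le_SucI)
    show ?thesis
    proof (rule vf_up[OF assms(3)])
      show "\<forall>t. 0 \<le> Val A B n W [c0] t" using Val_mono[OF pd that wf0] by blast
      show "\<forall>t. Val A B n W [c0] t \<le> Val A B z W [c0] t" using Val_le[OF pd that wf0 \<open>n \<le> z\<close>] by blast
      show "finite (supp (Val A B z W [c0]))"
        using Val_supp[OF pd] finite_Rs[OF pd] by (metis (mono_tags, lifting) finite_subset mem_Collect_eq subsetI supp_def)
      show "val_of (Val A B n W [c0]) \<in> \<phi>" using n(2) by (simp add: Op_def)
    qed
  qed
  have "\<forall>Sc. is_scheduler A B Sc \<and> non_blocking A B Sc (P, s) \<longrightarrow>
              (\<exists>\<mu>. bigstep A B Sc z [] (P, s) \<mu> \<and> val_of \<mu> \<in> \<phi>)"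
  proof (intro allI impI)
    fix Sc assume "is_scheduler A B Sc \<and> non_blocking A B Sc (P, s)"
    then obtain \<mu> where mu: "bigstep A B Sc z [] (P, s) \<mu>" unfolding non_blocking_def by blast
    have "wfc (P, s)" using assms(2) by (simp add: wfc_def)
    from bigstep_rep[OF pd mu this, of "[]"] obtain W where "validW A B W" "Val A B z W [c0] = \<mu>"
      by (auto simp: c0_def)
    then show "\<exists>\<mu>. bigstep A B Sc z [] (P, s) \<mu> \<and> val_of \<mu> \<in> \<phi>" using mu allK by blast
  qed
  then show ?thesis using zpos by blast
qed

end
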